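(* Let $\mathcal{B}=(T,\bowtie)$ be a block of homogeneous transactions, let $k$ be the chromatic number of the conflict graph $(T,\bowtie)$, and let $c_{\min}:T\to\{1,\dots,k\}$ be a proper vertex coloring of $(T,\bowtie)$ with $k$ colors. Let $T_i=\{tx\in T: c_{\min}(tx)=i\}$ and $\mathcal S_{c_{\min}}=\mathrm{LevelSchedule}(T_1,\dots,T_k)$. Then $\mathrm{Lt}_{\mathbb 1}(\mathcal S_{c_{\min}})=k$.
   Context: A block consists of a finite set $T$ of transactions with a symmetric irreflexive conflict relation $\bowtie$; the conflict graph is the undirected graph $(T,\bowtie)$. The block is homogeneous, and all transaction lengths are taken to be $1$ (length function $\mathbb 1\equiv 1$). A schedule is a set $\mathcal S\subseteq T\times T$ with $(T,\mathcal S)$ acyclic. The latency $\mathrm{Lt}_{\mathbb 1}(\mathcal S)$ is the maximum number of vertices on a directed path in $(T,\mathcal S)$. $\mathrm{LevelSchedule}(B_1,\dots,B_k)$ for an ordered partition of $T$ into conflict-free sets: set $B_0=\emptyset$, $\mathcal S=\emptyset$; for $i=1,\dots,k$ and, for each $i$, for $j=i-1,\dots,0$ (decreasing): let $E=\{(u,v)\in B_j\times B_i: u\bowtie v\}$, let $P$ be the set of pairs $(x,y)$ with a directed path from $x$ to $y$ in the current $(T,\mathcal S)$, and set $\mathcal S\leftarrow\mathcal S\cup(E\setminus P)$; output $\mathcal S$. *)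

theory Defs
  imports Main
begin

definition block :: "'a set \<Rightarrow> ('a \<Rightarrow> 'a \<Rightarrow> bool) \<Rightarrow> bool" where
  "block T cf \<longleftrightarrow> finite T \<and> (\<forall>x y. cf x y \<longrightarrow> cf y x) \<and> (\<forall>x. \<not> cf x x)"

definition proper_coloring :: "'a set \<Rightarrow> ('a \<Rightarrow> 'a \<Rightarrow> bool) \<Rightarrow> nat \<Rightarrow> ('a \<Rightarrow> nat) \<Rightarrow> bool" where
  "proper_coloring T cf k c \<longleftrightarrow>
     (\<forall>x\<in>T. c x \<in> {1..k}) \<and> (\<forall>x\<in>T. \<forall>y\<in>T. cf x y \<longrightarrow> c x \<noteq> c y)"

definition chromatic_number :: "'a set \<Rightarrow> ('a \<Rightarrow> 'a \<Rightarrow> bool) \<Rightarrow> nat" where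
  "chromatic_number T cf = (LEAST k. \<exists>c. proper_coloring T cf k c)"

definition add_edges :: "('a \<Rightarrow> 'a \<Rightarrow> bool) \<Rightarrow> 'a set \<Rightarrow> 'a set \<Rightarrow> ('a \<times> 'a) set \<Rightarrow> ('a \<times> 'a) set" where
  "add_edges cf Bj Bi S = S \<union> ({(u, v). u \<in> Bj \<and> v \<in> Bi \<and> cf u v} - S\<^sup>+)"

text \<open>LevelSchedule(B_1,...,B_k), with the blocks given as a function
B : nat => 'a set (only B 1 .. B k are used) and B_0 = {}.\<close>

definition level_schedule :: "('a \<Rightarrow> 'a \<Rightarrow> bool) \<Rightarrow> (nat \<Rightarrow> 'a set) \<Rightarrow> nat \<Rightarrow> ('a \<times> 'a) set" where
  "level_schedule cf B k =
     (let B' = (\<lambda>j. if j = 0 then {} else B j) in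
      fold (\<lambda>i S. fold (\<lambda>j S'. add_edges cf (B' j) (B' i) S') (rev [0..<i]) S)
           [1..<Suc k] {})"

text \<open>Directed path (as a nonempty vertex sequence) in (T,S), and the latency
with unit lengths: maximal number of vertices on a directed path.\<close>

definition dpath :: "'a set \<Rightarrow> ('a \<times> 'a) set \<Rightarrow> 'a list \<Rightarrow> bool" where
  "dpath T S xs \<longleftrightarrow> xs \<noteq> [] \<and> set xs \<subseteq> T \<and>
     (\<forall>i. Suc i < length xs \<longrightarrow> (xs ! i, xs ! Suc i) \<in> S)"

definition latency1 :: "'a set \<Rightarrow> ('a \<times> 'a) set \<Rightarrow> nat" where
  "latency1 T S = Sup {length xs | xs. dpath T S xs}"

end

theory Submission
  imports Defs
begin

lemma fold_ext:
  assumes "\<And>x S. S \<subseteq> f x S"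
  shows "S \<subseteq> fold f xs S"
  using assms by (induction xs arbitrary: S) (auto, blast)

lemma fold_inv:
  assumes "\<And>x S. x \<in> set xs \<Longrightarrow> P S \<Longrightarrow> P (f x S)" "P S"
  shows "P (fold f xs S)"
  using assms by (induction xs arbitrary: S) auto

lemma fold_reach:
  assumes ext: "\<And>x S. S \<subseteq> f x S" and x: "x \<in> set xs"
    and r: "\<And>S. (a, b) \<in> (f x S)\<^sup>+"
  shows "(a, b) \<in> (fold f xs S)\<^sup>+"
  using x
proof (induction xs arbitrary: S)
  case Nil then show ?case by simp
next
  case (Cons y ys)
  show ?case
  proof (cases "x = y")
    case True
    have "f y S \<subseteq> fold f ys (f y S)" by (rule fold_ext[OF ext])
    then show ?thesis using r[of S] True by (auto intro: trancl_mono)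
  next
    case False
    then show ?thesis using Cons by auto
  qed
qed

lemma dpath_snoc:
  assumes "dpath T S p" "(last p, v) \<in> S" "v \<in> T"
  shows "dpath T S (p @ [v])"
  using assms unfolding dpath_def
  apply (auto simp: nth_append)
  by (metis One_nat_def Suc_lessI diff_Suc_1 last_conv_nth less_Suc_eq_0_disj)

lemma trancl_path:
  assumes "(u, v) \<in> S\<^sup>+" and ST: "S \<subseteq> T \<times> T"
  shows "\<And>p. dpath T S p \<Longrightarrow> last p = u \<Longrightarrow> \<exists>p'. dpath T S p' \<and> last p' = v \<and> length p' > length p"
  using assms(1)
proof (induction rule: trancl_induct)
  case (base y)
  then show ?case using dpath_snoc[of T S p y] ST by (intro exI[of _ "p @ [y]"]) auto
next
  case (step y z)
  then obtain p' where "dpath T S p'" "last p' = y" "length p' > length p" by blast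
  then show ?case using dpath_snoc[of T S p' z] ST step by (intro exI[of _ "p' @ [z]"]) auto
qed

theorem lemma5:
  fixes T :: "'a set" and cf :: "'a \<Rightarrow> 'a \<Rightarrow> bool" and c :: "'a \<Rightarrow> nat" and k :: nat
  assumes "block T cf"
    and "k = chromatic_number T cf"
    and "proper_coloring T cf k c"
  shows "latency1 T (level_schedule cf (\<lambda>i. {tx \<in> T. c tx = i}) k) = k"
proof -
  define B where "B = (\<lambda>i. {tx \<in> T. c tx = i})"
  define B' where "B' = (\<lambda>j. if j = 0 then {} else B j)"
  define g where "g = (\<lambda>i S. fold (\<lambda>j S'. add_edges cf (B' j) (B' i) S') (rev [0..<i]) S)"
  define S where "S = level_schedule cf B k"
  have Sdef: "S = fold g [1..<Suc k] {}"
    unfolding S_def level_schedule_def g_def B'_def by simp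
  define P where "P = (\<lambda>S. \<forall>(u,v)\<in>S. u \<in> T \<and> v \<in> T \<and> cf u v \<and> c u < c v)"
  have extI: "\<And>j i S'. S' \<subseteq> add_edges cf (B' j) (B' i) S'" unfolding add_edges_def by auto
  have extO: "\<And>i S. S \<subseteq> g i S" unfolding g_def by (rule fold_ext[OF extI])
  have PS: "P S" unfolding Sdef
  proof (rule fold_inv)
    show "P {}" unfolding P_def by simp
    fix i S0 assume "P S0"
    show "P (g i S0)" unfolding g_def
    proof (rule fold_inv)
      fix j S' assume j: "j \<in> set (rev [0..<i])" and "P S'"
      then show "P (add_edges cf (B' j) (B' i) S')"
        unfolding P_def add_edges_def B'_def B_def by auto
    qed fact
  qed
  have ST: "S \<subseteq> T \<times> T" using PS unfolding P_def by auto
  have col: "\<forall>x\<in>T. c x \<in> {1..k}" "\<forall>x\<in>T. \<forall>y\<in>T. cf x y \<longrightarrow> c x \<noteq> c y"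
    using assms(3) unfolding proper_coloring_def by auto
  have reach: "(u, v) \<in> S\<^sup>+" if "u \<in> T" "v \<in> T" "cf u v" "c u < c v" for u v
  proof -
    have cu: "c u \<ge> 1" "c v \<le> k" using col that by auto
    show ?thesis unfolding Sdef
    proof (rule fold_reach[OF extO, of "c v"])
      show "c v \<in> set [1..<Suc k]" using cu that by auto
      fix S0
      show "(u, v) \<in> (g (c v) S0)\<^sup>+" unfolding g_def
      proof (rule fold_reach[OF extI, of "c u"])
        show "c u \<in> set (rev [0..<c v])" using that by auto
        fix S'
        show "(u, v) \<in> (add_edges cf (B' (c u)) (B' (c v)) S')\<^sup>+"
        proof (cases "(u, v) \<in> S'\<^sup>+")
          case True
          then show ?thesis using extI by (blast intro: trancl_mono)
        next
          case False
          then have "(u,v) \<in> add_edges cf (B' (c u)) (B' (c v)) S'"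
            unfolding add_edges_def B'_def B_def using that cu by auto
          then show ?thesis by blast
        qed
      qed
    qed
  qed
  define X where "X = {length xs | xs. dpath T S xs}"
  have bound: "length xs \<le> k" if "dpath T S xs" for xs
  proof -
    have "\<forall>i<length xs. c (xs ! i) \<ge> Suc i"
    proof (intro allI impI)
      fix i assume "i < length xs"
      then show "c (xs ! i) \<ge> Suc i"
      proof (induction i)
        case 0
        then show ?case using that col unfolding dpath_def by (auto simp: subset_iff)
      next
        case (Suc i)
        then have "(xs ! i, xs ! Suc i) \<in> S" using that unfolding dpath_def by auto
        then have "c (xs ! i) < c (xs ! Suc i)" using PS unfolding P_def by auto
        then show ?case using Suc by auto
      qed
    qed
    moreover have "xs \<noteq> []" "set xs \<subseteq> T" using that unfolding dpath_def by auto
    ultimately show ?thesis using col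
      by (metis One_nat_def Suc_pred atLeastAtMost_iff diff_less length_greater_0_conv
          le_trans less_numeral_extra(1) nth_mem subsetD)
  qed
  have bddX: "bdd_above X" unfolding X_def using bound by (intro bdd_aboveI[of _ k]) blast
  have le: "Sup X \<le> k"
  proof (cases "X = {}")
    case True then show ?thesis by simp
  next
    case False then show ?thesis using bound unfolding X_def by (auto intro!: cSup_least)
  qed
  define L where "L = (\<lambda>x. Sup {length xs | xs. dpath T S xs \<and> last xs = x})"
  have Lin: "\<exists>p. dpath T S p \<and> last p = x \<and> length p = L x" if "x \<in> T" for x
  proof -
    let ?Y = "{length xs | xs. dpath T S xs \<and> last xs = x}"
    have "[x] \<in> {xs. dpath T S xs}" using that unfolding dpath_def by auto
    hence ne: "?Y \<noteq> {}" by force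
    have "bdd_above ?Y" using bound by (intro bdd_aboveI[of _ k]) blast
    hence "finite ?Y" by (simp add: bdd_above_nat)
    hence "Sup ?Y \<in> ?Y" using ne Max_in[of ?Y] unfolding Sup_nat_def by presburger
    then show ?thesis unfolding L_def by auto
  qed
  have pc: "proper_coloring T cf (Sup X) L"
    unfolding proper_coloring_def
  proof (intro conjI ballI impI)
    fix x assume x: "x \<in> T"
    obtain p where p: "dpath T S p" "last p = x" "length p = L x" using Lin[OF x] by blast
    have "L x \<ge> 1" using p unfolding dpath_def by (cases p) auto
    moreover have "L x \<le> Sup X" using p(1) bddX unfolding X_def p(3)[symmetric] by (intro cSup_upper) blast+
    ultimately show "L x \<in> {1..Sup X}" by auto
  next
    fix x y assume x: "x \<in> T" and y: "y \<in> T" and cxy: "cf x y"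
    have cyx: "cf y x" using assms(1) cxy unfolding block_def by blast
    have lt: "L u < L v" if uv: "u \<in> T" "v \<in> T" "cf u v" "c u < c v" for u v
    proof -
      obtain p where p: "dpath T S p" "last p = u" "length p = L u" using Lin[OF uv(1)] by blast
      obtain p' where p': "dpath T S p'" "last p' = v" "length p' > length p"
        using trancl_path[OF reach[OF uv] ST p(1,2)] by blast
      have "length p' \<le> L v" unfolding L_def using p' bound
        by (intro cSup_upper bdd_aboveI[of _ k]) blast+
      then show ?thesis using p p' by simp
    qed
    have "c x \<noteq> c y" using col x y cxy by blast
    then show "L x \<noteq> L y"
      using lt[OF x y cxy] lt[OF y x cyx] by (cases "c x < c y") auto
  qed
  have "k \<le> Sup X" unfolding assms(2) chromatic_number_def
    using pc by (intro Least_le) blast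
  then show ?thesis using le unfolding latency1_def X_def S_def B_def by simp
qed

end
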